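(* Let $f\in C^1([0,1],\mathbb{R})$ satisfy $f(0)=f(1)=0$, $f(s)>0$ for all $s\in(0,1)$, $f'(1)<0$, and suppose there exist $s_0\in(0,1)$, $K\ge 0$, $\alpha>0$ and $r>0$ such that $$f(s)\le r\frac{s}{(1+|\ln s|)^\alpha}\ \text{ for all } s\in(0,1),\qquad f(s)\ge r\frac{s}{(1+|\ln s|)^\alpha}(1-Ks)\ \text{ for all } s\in(0,s_0].$$ Let $\mu>0$, $p:=\frac{1}{\alpha+1}$, and for $M>e$ define $z_0:=\big(\frac{\ln M}{\mu}\big)^{1/p}$ and $w(z):=Me^{-\mu z^p}$ for $z\ge z_0$ (so $0<w\le1$). Then for any $M>e$ there is $c>0$ such that $$w''(z)+cw'(z)+f(w(z))\le 0\quad\text{for all } z\ge z_0.$$ *)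

theory Defs
  imports "HOL-Analysis.Analysis"
begin

end

theory Submission
  imports Defs
begin

lemma derivs:
  fixes M \<mu> p z :: real
  assumes z: "z > 0"
  defines "w \<equiv> (\<lambda>z. M * exp (- \<mu> * z powr p))"
  shows "deriv w z = - \<mu> * p * z powr (p - 1) * w z"
    and "deriv (deriv w) z = w z * \<mu> * p * ((1 - p) * z powr (p - 1) / z + \<mu> * p * z powr (p - 1) * z powr (p - 1))"
proof -
  define g1 where "g1 = (\<lambda>z. - \<mu> * p * z powr (p - 1) * w z)"
  define g2 where "g2 = (\<lambda>z. w z * \<mu> * p * ((1 - p) * z powr (p - 1) / z + \<mu> * p * z powr (p - 1) * z powr (p - 1)))"
  have d1: "(w has_real_derivative g1 x) (at x)" if "x > 0" for x
    unfolding w_def g1_def using that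
    apply (auto intro!: derivative_eq_intros)
    done
  have d2: "(g1 has_real_derivative g2 x) (at x)" if "x > 0" for x
  proof -
    have pw: "x powr (p - 2) = x powr (p - 1) / x"
      using powr_diff[of x "p - 1" 1] that by (simp add: algebra_simps)
    show ?thesis
      unfolding w_def g1_def g2_def using that
      apply (auto intro!: derivative_eq_intros)
      apply (simp add: pw field_simps)
      done
  qed
  have e1: "deriv w x = g1 x" if "x > 0" for x using d1[OF that] by (rule DERIV_imp_deriv)
  show "deriv w z = - \<mu> * p * z powr (p - 1) * w z" using e1[OF z] g1_def by simp
  have "(deriv w has_real_derivative g2 z) (at z)"
    by (rule has_field_derivative_transform_within_open[of g1 _ _ "{0<..}"]) (use d2 z e1 in auto)
  then show "deriv (deriv w) z = g2 z" by (rule DERIV_imp_deriv)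
qed

lemma main:
  fixes f :: "real \<Rightarrow> real" and \<alpha> r \<mu> M p :: real
  assumes f1: "f 1 = 0" and \<alpha>: "\<alpha> > 0" and r: "r > 0"
    and upper: "\<forall>s\<in>{0<..<1}. f s \<le> r * s / (1 + \<bar>ln s\<bar>) powr \<alpha>"
    and \<mu>: "\<mu> > 0" and M: "M > exp 1" and pdef: "p = 1 / (\<alpha> + 1)"
  defines "w \<equiv> (\<lambda>z. M * exp (- \<mu> * z powr p))"
  shows "\<exists>c>0. \<forall>z\<ge>(ln M / \<mu>) powr (1 / p). deriv (deriv w) z + c * deriv w z + f (w z) \<le> 0"
proof -
  define L where "L = ln M"
  have M0: "M > 0" using M by (meson exp_gt_zero less_trans)
  have L1: "L > 1" unfolding L_def using M M0 by (metis ln_exp ln_less_cancel_iff exp_gt_zero)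
  have p0: "p > 0" "p < 1" using \<alpha> pdef by auto
  have ip: "1 / p = \<alpha> + 1" using pdef \<alpha> by simp
  have pa: "p - 1 = p * (- \<alpha>)" using pdef \<alpha> by (simp add: field_simps)
  define t0 where "t0 = L / \<mu>"
  have t0: "t0 > 0" using L1 \<mu> t0_def by simp
  define z0 where "z0 = t0 powr (1 / p)"
  have z0: "z0 > 0" using t0 z0_def by simp
  define c where "c = (1 - p) / z0 + \<mu> * p * z0 powr (p - 1) + r * t0 powr \<alpha> / (\<mu> * p) + 1"
  have c0: "c > 0" unfolding c_def using p0 z0 \<mu> r t0
    by (intro add_nonneg_pos add_nonneg_nonneg) auto
  have key: "deriv (deriv w) z + c * deriv w z + f (w z) \<le> 0" if zz: "z \<ge> z0" for z
  proof -
    have z: "z > 0" using zz z0 by simp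
    define t where "t = z powr p"
    have tt0: "t \<ge> t0"
    proof -
      have "z0 powr p \<le> z powr p" using zz z0 p0 by (intro powr_mono2) auto
      moreover have "z0 powr p = t0" unfolding z0_def using p0 t0 by (simp add: powr_powr)
      ultimately show ?thesis unfolding t_def by simp
    qed
    have t: "t > 0" using tt0 t0 by simp
    define zq where "zq = z powr (p - 1)"
    have zqt: "zq = t powr (- \<alpha>)" unfolding zq_def t_def by (simp add: powr_powr pa)
    define W where "W = w z"
    have W: "W = M * exp (- \<mu> * t)" unfolding W_def w_def t_def by simp
    have W0: "W > 0" using W M0 by simp
    define A where "A = W * \<mu> * p * zq"
    have A0: "A > 0" unfolding A_def zq_def using W0 \<mu> p0 z by simp
    have dw: "deriv w z = - A" unfolding A_def W_def zq_def w_def using derivs(1)[OF z] by simp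
    have ddw: "deriv (deriv w) z = A * ((1 - p) / z + \<mu> * p * zq)"
      unfolding A_def W_def zq_def w_def using derivs(2)[OF z, of M \<mu> p] by (simp add: field_simps)
    have lnW: "ln W = L - \<mu> * t" unfolding W L_def using M0 by (simp add: ln_mult)
    have Lt: "L \<le> \<mu> * t" using tt0 \<mu> unfolding t0_def by (simp add: field_simps)
    have W1: "W \<le> 1" using lnW Lt W0 by (metis diff_ge_0_iff_ge ln_le_zero_iff neg_le_0_iff_le minus_diff_eq)
    define D where "D = 1 + \<mu> * t - L"
    have absW: "\<bar>ln W\<bar> = \<mu> * t - L" using lnW Lt by simp
    have fW: "f W \<le> r * W / D powr \<alpha>"
    proof (cases "W < 1")
      case True
      have "1 + \<bar>ln W\<bar> = D" using absW D_def by simp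
      moreover have "f W \<le> r * W / (1 + \<bar>ln W\<bar>) powr \<alpha>" using upper W0 True by auto
      ultimately show ?thesis by simp
    next
      case False then have "W = 1" using W1 by simp
      then show ?thesis using f1 r D_def Lt by simp
    qed
    have D1: "D \<ge> 1" using D_def Lt by simp
    have tD: "t \<le> t0 * D"
    proof -
      have "t0 * D - t = (t - t0) * (L - 1)" unfolding D_def using t0_def \<mu> by (simp add: field_simps)
      also have "\<dots> \<ge> 0" using tt0 L1 by simp
      finally show ?thesis by simp
    qed
    have "(t / t0) powr \<alpha> \<le> D powr \<alpha>" using tD t0 t \<alpha> by (intro powr_mono2) (auto simp: field_simps)
    then have "t powr \<alpha> / t0 powr \<alpha> \<le> D powr \<alpha>" by (simp add: powr_divide)
    then have "r * W / D powr \<alpha> \<le> r * W / (t powr \<alpha> / t0 powr \<alpha>)"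
    proof (rule divide_left_mono)
      show "0 \<le> r * W" using r W0 by simp
      show "0 < D powr \<alpha> * (t powr \<alpha> / t0 powr \<alpha>)" using D1 t t0 by simp
    qed
    also have "\<dots> = A * (r * t0 powr \<alpha> / (\<mu> * p))"
      unfolding A_def zqt using \<mu> p0 t by (simp add: powr_minus_divide field_simps)
    finally have fA: "f W \<le> A * (r * t0 powr \<alpha> / (\<mu> * p))" using fW by simp
    have b1: "(1 - p) / z \<le> (1 - p) / z0" using p0 z0 zz by (intro divide_left_mono) auto
    have b2: "zq \<le> z0 powr (p - 1)" unfolding zq_def using p0 z0 zz by (intro powr_mono2') auto
    have "(1 - p) / z + \<mu> * p * zq \<le> (1 - p) / z0 + \<mu> * p * z0 powr (p - 1)"
      using b1 b2 \<mu> p0 by (intro add_mono mult_left_mono) auto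
    then have "A * ((1 - p) / z + \<mu> * p * zq) \<le> A * ((1 - p) / z0 + \<mu> * p * z0 powr (p - 1))"
      using A0 by (intro mult_left_mono) auto
    moreover have "A * c = A * ((1 - p) / z0 + \<mu> * p * z0 powr (p - 1)) + A * (r * t0 powr \<alpha> / (\<mu> * p)) + A"
      unfolding c_def by (simp add: distrib_left)
    moreover have "deriv (deriv w) z + c * deriv w z + f (w z) = A * ((1 - p) / z + \<mu> * p * zq) - A * c + f W"
      unfolding ddw dw W_def[symmetric] by (simp add: mult.commute)
    ultimately show ?thesis using fA A0 by linarith
  qed
  show ?thesis using c0 key unfolding z0_def t0_def L_def by blast
qed
theorem lemma2p1:
  fixes f f' :: "real \<Rightarrow> real" and s0 K \<alpha> r \<mu> :: real
  assumes f_deriv: "\<forall>x\<in>{0..1}. (f has_real_derivative f' x) (at x within {0..1})"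
    and f'_cont: "continuous_on {0..1} f'"
    and f0: "f 0 = 0" and f1: "f 1 = 0"
    and fpos: "\<forall>s\<in>{0<..<1}. f s > 0"
    and f'1: "f' 1 < 0"
    and s0: "s0 \<in> {0<..<1}" and K: "K \<ge> 0" and \<alpha>: "\<alpha> > 0" and r: "r > 0"
    and upper: "\<forall>s\<in>{0<..<1}. f s \<le> r * s / (1 + \<bar>ln s\<bar>) powr \<alpha>"
    and lower: "\<forall>s\<in>{0<..s0}. f s \<ge> r * s / (1 + \<bar>ln s\<bar>) powr \<alpha> * (1 - K * s)"
    and \<mu>: "\<mu> > 0"
  shows "\<forall>M::real. M > exp 1 \<longrightarrow>
           (let p = 1 / (\<alpha> + 1);
                z0 = (ln M / \<mu>) powr (1 / p);
                w = (\<lambda>z. M * exp (- \<mu> * z powr p))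
            in \<exists>c>0. \<forall>z\<ge>z0. deriv (deriv w) z + c * deriv w z + f (w z) \<le> 0)"
  proof (intro allI impI)
  fix M :: real
  assume M: "M > exp 1"
  show "let p = 1 / (\<alpha> + 1);
                z0 = (ln M / \<mu>) powr (1 / p);
                w = (\<lambda>z. M * exp (- \<mu> * z powr p))
            in \<exists>c>0. \<forall>z\<ge>z0. deriv (deriv w) z + c * deriv w z + f (w z) \<le> 0"
    unfolding Let_def by (rule main[OF f1 \<alpha> r upper \<mu> M refl])
qed

end
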